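(* Assume $n^{2/3}$ is an integer. Consider Algorithm ProxSAGA (described in the context) with $b=n^{2/3}$ and $\eta=1/(5L)$, run for $T\ge1$ iterations. Then the output $x_a$ satisfies $$\mathbb E\big[\|\mathcal G_\eta(x_a)\|^2\big]\le \frac{50L\,(F(x^0)-F(x^* ))}{3T},$$ where $x^*$ is an optimal solution of $\min_x F(x)$.
   Context: Setting: Let $n,d\ge 1$ be integers and $[n]=\{1,\dots,n\}$. Let $f_1,\dots,f_n:\mathbb R^d\to\mathbb R$ be differentiable (possibly nonconvex) functions, each $L$-smooth for some $L>0$, i.e. $\|\nabla f_i(x)-\nabla f_i(y)\|\le L\|x-y\|$ for all $x,y\in\mathbb R^d$ and $i\in[n]$. Let $f=\frac1n\sum_{i=1}^n f_i$. Let $h:\mathbb R^d\to\mathbb R\cup\{+\infty\}$ be proper, lower semicontinuous and convex, with closed domain. Let $F=f+h$, and let $x^*$ be a global minimizer of $F$ on $\mathbb R^d$ (assumed to exist). For $\eta>0$, $\mathrm{prox}_{\eta h}(x):=\arg\min_{y\in\mathbb R^d}\big(h(y)+\frac1{2\eta}\|y-x\|^2\big)$, and the gradient mapping is $\mathcal G_\eta(x):=\frac1\eta\big[x-\mathrm{prox}_{\eta h}(x-\eta\nabla f(x))\big]$. Algorithm ProxSAGA$(x^0,T,b,\eta)$: Given $x^0\in\mathbb R^d$, positive integers $T,b$ and $\eta>0$, set $\alpha^0_i=x^0$ for all $i\in[n]$. For $t=0,1,\dots$ let $g^t=\frac1n\sum_{i=1}^n\nabla f_i(\alpha^t_i)$.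 For $t=0,\dots,T-1$: draw two multisets $I_t,J_t$, each consisting of $b$ indices drawn independently and uniformly at random from $[n]$ (with replacement; $I_t$, $J_t$ independent of each other and of all previous draws); set $v^t=\frac1b\sum_{i\in I_t}\big(\nabla f_i(x^t)-\nabla f_i(\alpha^t_i)\big)+g^t$ and $x^{t+1}=\mathrm{prox}_{\eta h}(x^t-\eta v^t)$; set $\alpha^{t+1}_j=x^t$ for $j\in J_t$ and $\alpha^{t+1}_j=\alpha^t_j$ for $j\notin J_t$. The output $x_a$ is chosen uniformly at random from $\{x^0,\dots,x^{T-1}\}$. Expectations are over all randomness of the algorithm. *)

theory Defs
  imports "HOL-Analysis.Analysis" "HOL-Probability.Probability"
begin

definition proper_fun :: "('a \<Rightarrow> ereal) \<Rightarrow> bool" where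
  "proper_fun h \<longleftrightarrow> (\<forall>x. h x \<noteq> -\<infinity>) \<and> (\<exists>x. h x \<noteq> \<infinity>)"

definition ext_dom :: "('a \<Rightarrow> ereal) \<Rightarrow> 'a set" where
  "ext_dom h = {x. h x < \<infinity>}"

definition lsc_fun :: "('a::topological_space \<Rightarrow> ereal) \<Rightarrow> bool" where
  "lsc_fun h \<longleftrightarrow> (\<forall>x. h x \<le> Liminf (at x) h)"

definition ext_convex :: "('a::real_vector \<Rightarrow> ereal) \<Rightarrow> bool" where
  "ext_convex h \<longleftrightarrow> (\<forall>x y u. 0 < u \<and> u < 1 \<longrightarrow>
      h (u *\<^sub>R x + (1 - u) *\<^sub>R y) \<le> ereal u * h x + ereal (1 - u) * h y)"

text \<open>Proximal operator: the (unique, under the standing assumptions) minimiser.\<close>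
definition prox :: "real \<Rightarrow> ('a::real_normed_vector \<Rightarrow> ereal) \<Rightarrow> 'a \<Rightarrow> 'a" where
  "prox \<eta> h x = (SOME y. \<forall>z. h y + ereal (norm (y - x)^2 / (2 * \<eta>))
                              \<le> h z + ereal (norm (z - x)^2 / (2 * \<eta>)))"

definition full_grad :: "nat \<Rightarrow> (nat \<Rightarrow> 'a \<Rightarrow> 'a::real_vector) \<Rightarrow> 'a \<Rightarrow> 'a" where
  "full_grad n gf x = (1 / real n) *\<^sub>R (\<Sum>i<n. gf i x)"

definition grad_map :: "nat \<Rightarrow> (nat \<Rightarrow> 'a \<Rightarrow> 'a::real_normed_vector) \<Rightarrow> ('a \<Rightarrow> ereal)
    \<Rightarrow> real \<Rightarrow> 'a \<Rightarrow> 'a" where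
  "grad_map n gf h \<eta> x = (1 / \<eta>) *\<^sub>R (x - prox \<eta> h (x - \<eta> *\<^sub>R full_grad n gf x))"

text \<open>One ProxSAGA step. State (x, alpha); random input (I, J), each a multiset of b indices
  from {0..<n} encoded as a function {0..<b} -> {0..<n} (draws with replacement).\<close>
definition saga_step :: "nat \<Rightarrow> nat \<Rightarrow> real \<Rightarrow> (nat \<Rightarrow> 'a \<Rightarrow> 'a::real_normed_vector)
    \<Rightarrow> ('a \<Rightarrow> ereal) \<Rightarrow> (nat \<Rightarrow> nat) \<times> (nat \<Rightarrow> nat) \<Rightarrow> 'a \<times> (nat \<Rightarrow> 'a) \<Rightarrow> 'a \<times> (nat \<Rightarrow> 'a)" where
  "saga_step n b \<eta> gf h IJ st =
     (let x = fst st; \<alpha> = snd st; I = fst IJ; J = snd IJ;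
          g = (1 / real n) *\<^sub>R (\<Sum>i<n. gf i (\<alpha> i));
          v = (1 / real b) *\<^sub>R (\<Sum>j<b. gf (I j) x - gf (I j) (\<alpha> (I j))) + g
      in (prox \<eta> h (x - \<eta> *\<^sub>R v), \<lambda>i. if i \<in> J ` {..<b} then x else \<alpha> i))"

primrec saga_state :: "nat \<Rightarrow> nat \<Rightarrow> real \<Rightarrow> (nat \<Rightarrow> 'a \<Rightarrow> 'a::real_normed_vector)
    \<Rightarrow> ('a \<Rightarrow> ereal) \<Rightarrow> 'a \<Rightarrow> (nat \<Rightarrow> (nat \<Rightarrow> nat) \<times> (nat \<Rightarrow> nat)) \<Rightarrow> nat \<Rightarrow> 'a \<times> (nat \<Rightarrow> 'a)" where
  "saga_state n b \<eta> gf h x0 \<omega> 0 = (x0, \<lambda>i. x0)"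
| "saga_state n b \<eta> gf h x0 \<omega> (Suc t) = saga_step n b \<eta> gf h (\<omega> t) (saga_state n b \<eta> gf h x0 \<omega> t)"

definition draw_space :: "nat \<Rightarrow> nat \<Rightarrow> nat \<Rightarrow> (nat \<Rightarrow> (nat \<Rightarrow> nat) \<times> (nat \<Rightarrow> nat)) set" where
  "draw_space n b T = ({..<T} \<rightarrow>\<^sub>E (({..<b} \<rightarrow>\<^sub>E {..<n}) \<times> ({..<b} \<rightarrow>\<^sub>E {..<n})))"

end

theory Submission
  imports Defs
begin


lemma lsc_ev_nhds:
  fixes h :: "'a::euclidean_space \<Rightarrow> ereal"
  assumes "lsc_fun h" "ereal C < h x"
  shows "eventually (\<lambda>y. ereal C < h y) (nhds x)"
proof -
  have "h x \<le> Liminf (at x) h" using assms(1) unfolding lsc_fun_def by blast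
  hence "eventually (\<lambda>y. ereal C < h y) (at x)" using assms(2) le_Liminf_iff by blast
  hence "eventually (\<lambda>y. y \<noteq> x \<longrightarrow> y \<in> UNIV \<longrightarrow> ereal C < h y) (nhds x)"
    by (simp add: eventually_at_filter)
  thus ?thesis by (rule eventually_mono) (use assms(2) in auto)
qed

lemma lsc_ev_seq:
  fixes h :: "'a::euclidean_space \<Rightarrow> ereal"
  assumes "lsc_fun h" "ereal C < h x" "X \<longlonglongrightarrow> x"
  shows "eventually (\<lambda>k. ereal C < h (X k)) sequentially"
  using lsc_ev_nhds[OF assms(1,2)] assms(3) unfolding filterlim_iff by blast



lemma ext_convex_fin:
  fixes h :: "'a::real_vector \<Rightarrow> ereal"
  assumes "ext_convex h" "0 < u" "u < 1" "h x = ereal a" "h y = ereal c"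
  shows "h (u *\<^sub>R x + (1 - u) *\<^sub>R y) \<le> ereal (u * a + (1 - u) * c)"
  using assms unfolding ext_convex_def by (metis plus_ereal.simps(1) times_ereal.simps(1))

lemma sublevel_bounded:
  fixes h :: "'a::euclidean_space \<Rightarrow> ereal"
  assumes hp: "proper_fun h" and lsc: "lsc_fun h" and cvx: "ext_convex h" and eta: "\<eta> > 0"
    and y0: "h y0 = ereal H0"
  shows "\<exists>R. \<forall>z. h z + ereal (norm (z - w)^2 / (2*\<eta>)) \<le> ereal M \<longrightarrow> norm (z - y0) \<le> R"
proof (rule ccontr)
  assume "\<not> ?thesis"
  hence ex: "\<forall>R. \<exists>z. h z + ereal (norm (z - w)^2 / (2*\<eta>)) \<le> ereal M \<and> norm (z - y0) > R"
    by (auto simp: not_le)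
  define a where "a = norm (y0 - w)"
  define K0 where "K0 = max 1 (2*a)"
  have "\<forall>k::nat. \<exists>z. h z + ereal (norm (z - w)^2 / (2*\<eta>)) \<le> ereal M \<and> norm (z - y0) > real k + K0"
    using ex by blast
  then obtain Z where ZZ: "\<forall>k. h (Z k) + ereal (norm (Z k - w)^2 / (2*\<eta>)) \<le> ereal M \<and> norm (Z k - y0) > real k + K0"
    by metis
  hence Z: "\<And>k. h (Z k) + ereal (norm (Z k - w)^2 / (2*\<eta>)) \<le> ereal M"
    "\<And>k. norm (Z k - y0) > real k + K0" by auto
  define r where "r k = norm (Z k - y0)" for k
  define s where "s k = 1 / r k" for k
  define W where "W k = s k *\<^sub>R Z k + (1 - s k) *\<^sub>R y0" for k
  have r_gt: "r k > real k + K0" for k using Z(2) r_def by auto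
  have r1: "r k > 1" for k using r_gt[of k] K0_def by auto
  have s01: "0 < s k" "s k < 1" for k using r1[of k] s_def by auto
  have Wy: "W k - y0 = s k *\<^sub>R (Z k - y0)" for k
    by (simp add: W_def algebra_simps)
  have Wn: "norm (W k - y0) = 1" for k
  proof -
    have "Z k \<noteq> y0" using r1[of k] r_def by auto
    thus ?thesis by (simp add: Wy s_def r_def)
  qed
  have hZ: "\<exists>v. h (Z k) = ereal v \<and> v \<le> M - norm (Z k - w)^2 / (2*\<eta>)" for k
  proof -
    have "h (Z k) \<noteq> -\<infinity>" using hp unfolding proper_fun_def by blast
    moreover have "h (Z k) \<noteq> \<infinity>" using Z(1)[of k] by auto
    ultimately obtain v where v: "h (Z k) = ereal v" by (cases "h (Z k)") auto
    thus ?thesis using Z(1)[of k] by auto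
  qed
  have bound: "h (W k) \<le> ereal (\<bar>M\<bar> + \<bar>H0\<bar> - real k / (8*\<eta>))" for k
  proof -
    obtain v where v: "h (Z k) = ereal v" "v \<le> M - norm (Z k - w)^2 / (2*\<eta>)" using hZ by blast
    have "h (W k) \<le> ereal (s k * v + (1 - s k) * H0)"
      unfolding W_def by (rule ext_convex_fin[OF cvx s01 v(1) y0])
    moreover have "s k * v + (1 - s k) * H0 \<le> \<bar>M\<bar> + \<bar>H0\<bar> - real k / (8*\<eta>)"
    proof -
      have "norm (Z k - w) \<ge> r k - a" unfolding r_def a_def
        using norm_triangle_ineq4[of "Z k - w" "y0 - w"] by (simp add: algebra_simps)
      moreover have "r k - a \<ge> r k / 2" using r_gt[of k] K0_def by auto
      ultimately have "norm (Z k - w) \<ge> r k / 2" by linarith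
      hence "norm (Z k - w)^2 \<ge> (r k / 2)^2" using r1[of k]
        by (intro power_mono) auto
      hence q: "norm (Z k - w)^2 / (2*\<eta>) \<ge> r k^2 / (8*\<eta>)"
        using eta by (simp add: field_simps power2_eq_square)
      have "s k * v \<le> s k * (M - r k^2 / (8*\<eta>))"
        using v(2) q s01[of k] by (intro mult_left_mono) auto
      also have "\<dots> = s k * M - r k / (8*\<eta>)"
        using r1[of k] by (simp add: s_def field_simps power2_eq_square)
      also have "\<dots> \<le> \<bar>M\<bar> - real k / (8*\<eta>)"
      proof -
        have "s k * M \<le> s k * \<bar>M\<bar>" using s01[of k] by (intro mult_left_mono) auto
        also have "\<dots> \<le> 1 * \<bar>M\<bar>" using s01[of k] by (intro mult_right_mono) auto
        finally have "s k * M \<le> \<bar>M\<bar>" by simp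
        moreover have "real k / (8*\<eta>) \<le> r k / (8*\<eta>)" using r_gt[of k] K0_def eta
          by (intro divide_right_mono) auto
        ultimately show ?thesis by linarith
      qed
      finally have 1: "s k * v \<le> \<bar>M\<bar> - real k / (8*\<eta>)" .
      have "(1 - s k) * H0 \<le> (1 - s k) * \<bar>H0\<bar>" using s01[of k] by (intro mult_left_mono) auto
      also have "\<dots> \<le> 1 * \<bar>H0\<bar>" using s01[of k] by (intro mult_right_mono) auto
      finally have "(1 - s k) * H0 \<le> \<bar>H0\<bar>" by simp
      with 1 show ?thesis by linarith
    qed
    ultimately show ?thesis using order_trans ereal_less_eq(3) by blast
  qed
  have "seq_compact (cball y0 1)" by (simp add: compact_imp_seq_compact)
  moreover have "\<forall>k. W k \<in> cball y0 1" using Wn by (simp add: dist_norm norm_minus_commute)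
  ultimately obtain l \<sigma> where l: "strict_mono \<sigma>" "(W \<circ> \<sigma>) \<longlonglongrightarrow> l"
    unfolding seq_compact_def by blast
  have "h l \<noteq> -\<infinity>" using hp unfolding proper_fun_def by blast
  then obtain C where C: "ereal C < h l"
    proof (cases "h l")
    case (real r) thus ?thesis using that[of "r - 1"] by simp
  next
    case PInf thus ?thesis using that[of 0] by simp
  qed (use \<open>h l \<noteq> -\<infinity>\<close> in simp)
  have ev1: "eventually (\<lambda>j. ereal C < h ((W \<circ> \<sigma>) j)) sequentially"
    by (rule lsc_ev_seq[OF lsc C l(2)])
  obtain k0 :: nat where k0: "\<bar>M\<bar> + \<bar>H0\<bar> - real k0 / (8*\<eta>) \<le> C"
  proof -
    obtain k0 :: nat where "real k0 \<ge> 8*\<eta>*(\<bar>M\<bar> + \<bar>H0\<bar> - C)" using real_arch_simple by blast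
    hence "\<bar>M\<bar> + \<bar>H0\<bar> - real k0 / (8*\<eta>) \<le> C" using eta by (simp add: field_simps)
    thus ?thesis using that by blast
  qed
  have ev2: "eventually (\<lambda>j. \<sigma> j \<ge> k0) sequentially"
    using l(1) eventually_sequentially seq_suble by (metis order_trans)
  obtain j where j: "ereal C < h (W (\<sigma> j))" "\<sigma> j \<ge> k0"
    using eventually_conj[OF ev1 ev2] eventually_sequentially by auto
  have "real k0 / (8*\<eta>) \<le> real (\<sigma> j) / (8*\<eta>)" using j(2) eta by (intro divide_right_mono) auto
  hence "\<bar>M\<bar> + \<bar>H0\<bar> - real (\<sigma> j) / (8*\<eta>) \<le> C" using k0 by linarith
  hence "ereal (\<bar>M\<bar> + \<bar>H0\<bar> - real (\<sigma> j) / (8*\<eta>)) \<le> ereal C" by simp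
  hence "h (W (\<sigma> j)) \<le> ereal C" using bound[of "\<sigma> j"] by (rule order_trans[rotated])
  thus False using j(1) by auto
qed



lemma prox_min_exists:
  fixes h :: "'a::euclidean_space \<Rightarrow> ereal"
  assumes hp: "proper_fun h" and lsc: "lsc_fun h" and cvx: "ext_convex h" and eta: "\<eta> > 0"
  shows "\<exists>y. \<forall>z. h y + ereal (norm (y - w)^2 / (2*\<eta>)) \<le> h z + ereal (norm (z - w)^2 / (2*\<eta>))"
proof -
  define q where "q z = norm (z - w)^2 / (2*\<eta>)" for z
  define \<psi> where "\<psi> z = h z + ereal (q z)" for z
  obtain y0 where "h y0 \<noteq> \<infinity>" using hp unfolding proper_fun_def by blast
  moreover have "h y0 \<noteq> -\<infinity>" using hp unfolding proper_fun_def by blast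
  ultimately obtain H0 where y0: "h y0 = ereal H0" by (cases "h y0") auto
  define M0 where "M0 = H0 + q y0"
  have psi0: "\<psi> y0 = ereal M0" by (simp add: \<psi>_def M0_def y0)
  obtain R where R: "\<And>z. \<psi> z \<le> ereal M0 \<Longrightarrow> norm (z - y0) \<le> R"
    using sublevel_bounded[OF hp lsc cvx eta y0, of w M0] unfolding \<psi>_def q_def by blast
  define m where "m = (INF z. \<psi> z)"
  have mle: "m \<le> \<psi> z" for z unfolding m_def by (rule INF_lower) simp
  have "\<exists>y. \<forall>z. \<psi> y \<le> \<psi> z"
  proof (cases "\<psi> y0 \<le> m")
    case True thus ?thesis using mle order_trans by blast
  next
    case False
    hence mlt: "m < ereal M0" using psi0 by simp
    define u where "u k = (if m = -\<infinity> then ereal (- real k) else m + ereal (1 / real (Suc k)))" for k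
    have "m < min (u k) (ereal M0)" for k
    proof -
      have "m < u k"
      proof (cases "m = -\<infinity>")
        case True thus ?thesis by (simp add: u_def)
      next
        case False
        then obtain m' where "m = ereal m'" using mlt by (cases m) auto
        thus ?thesis by (simp add: u_def)
      qed
      thus ?thesis using mlt by simp
    qed
    hence "\<forall>k. \<exists>y. \<psi> y < min (u k) (ereal M0)" unfolding m_def INF_less_iff by blast
    then obtain Y where Y: "\<And>k. \<psi> (Y k) < min (u k) (ereal M0)" by metis
    have "\<forall>k. Y k \<in> cball y0 R"
    proof
      fix k
      have "\<psi> (Y k) \<le> ereal M0" using Y[of k] by (simp add: less_imp_le)
      hence "norm (Y k - y0) \<le> R" by (rule R)
      thus "Y k \<in> cball y0 R" by (simp add: dist_norm norm_minus_commute)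
    qed
    moreover have "seq_compact (cball y0 R)" by (simp add: compact_imp_seq_compact)
    ultimately obtain l \<sigma> where l: "strict_mono \<sigma>" "(Y \<circ> \<sigma>) \<longlonglongrightarrow> l"
      unfolding seq_compact_def by blast
    have "\<psi> l \<le> m"
    proof (rule ccontr)
      assume "\<not> \<psi> l \<le> m"
      hence "m < \<psi> l" by simp
      then obtain C where C: "m < ereal C" "ereal C < \<psi> l" using ereal_dense2 by blast
      then obtain C' where C': "ereal C < ereal C'" "ereal C' < \<psi> l" using ereal_dense2 by blast
      have hl: "ereal (C' - q l) < h l"
      proof (cases "h l")
        case (real r) thus ?thesis using C'(2) by (simp add: \<psi>_def)
      qed (use C'(2) in \<open>auto simp: \<psi>_def\<close>)
      have ev1: "eventually (\<lambda>j. ereal (C' - q l) < h ((Y \<circ> \<sigma>) j)) sequentially"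
        by (rule lsc_ev_seq[OF lsc hl l(2)])
      have "(\<lambda>j. q ((Y \<circ> \<sigma>) j)) \<longlonglongrightarrow> q l" unfolding q_def
        using eta by (intro tendsto_intros l(2)) auto
      moreover have "q l - (C' - C) < q l" using C'(1) by simp
      ultimately have ev2: "eventually (\<lambda>j. q l - (C' - C) < q ((Y \<circ> \<sigma>) j)) sequentially"
        by (rule order_tendstoD(1))
      have evu: "eventually (\<lambda>k. u k \<le> ereal C) sequentially"
      proof (cases "m = -\<infinity>")
        case True
        obtain N :: nat where "real N \<ge> - C" using real_arch_simple by blast
        hence "\<forall>k\<ge>N. u k \<le> ereal C" using True by (auto simp: u_def)
        thus ?thesis using eventually_sequentially by blast
      next
        case False
        then obtain m' where m': "m = ereal m'" using mlt by (cases m) auto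
        hence "0 < C - m'" using C(1) by simp
        then obtain N where N: "inverse (real (Suc N)) < C - m'" using reals_Archimedean by blast
        have "u k \<le> ereal C" if "k \<ge> N" for k
        proof -
          have "1 / real (Suc k) \<le> 1 / real (Suc N)" using that by (simp add: frac_le)
          thus ?thesis using N m' False by (simp add: u_def inverse_eq_divide)
        qed
        thus ?thesis using eventually_sequentially by blast
      qed
      have ev3: "eventually (\<lambda>j. u (\<sigma> j) \<le> ereal C) sequentially"
        using evu filterlim_subseq[OF l(1)] unfolding filterlim_iff by blast
      obtain j where j: "ereal (C' - q l) < h (Y (\<sigma> j))" "q l - (C' - C) < q (Y (\<sigma> j))"
        "u (\<sigma> j) \<le> ereal C"
        using eventually_conj[OF ev1 eventually_conj[OF ev2 ev3]] eventually_sequentially by auto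
      have lt: "h (Y (\<sigma> j)) + ereal (q (Y (\<sigma> j))) < ereal C"
        using Y[of "\<sigma> j"] j(3) unfolding \<psi>_def by (meson min.strict_boundedE order_less_le_trans)
      show False
      proof (cases "h (Y (\<sigma> j))")
        case (real r) thus ?thesis using lt j(1,2) by simp
      qed (use lt j(1) in auto)
    qed
    thus ?thesis using mle order_trans by blast
  qed
  thus ?thesis unfolding \<psi>_def q_def by blast
qed



lemma small_lim:
  fixes A B :: real
  assumes "\<And>u. 0 < u \<Longrightarrow> u < 1 \<Longrightarrow> A \<le> u * B" "B \<ge> 0"
  shows "A \<le> 0"
proof (rule ccontr)
  assume "\<not> A \<le> 0"
  hence A: "A > 0" by simp
  define u where "u = min (1/2) (A / (2*(B+1)))"
  have u: "0 < u" "u < 1" using A assms(2) by (auto simp: u_def)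
  have "u * B \<le> (A / (2*(B+1))) * B" using assms(2) by (intro mult_right_mono) (auto simp: u_def)
  also have "\<dots> < A"
  proof -
    have "B / (2*(B+1)) < 1" using assms(2) by (simp add: field_simps)
    hence "A * (B / (2*(B+1))) < A * 1" using A by (intro mult_strict_left_mono) auto
    thus ?thesis by simp
  qed
  finally show False using assms(1)[OF u] by simp
qed

lemma norm_add_scale_sq:
  fixes a b :: "'a::real_inner"
  shows "norm (a + u *\<^sub>R b)^2 = norm a^2 + 2 * u * inner a b + u^2 * norm b^2"
  unfolding power2_norm_eq_inner by (simp add: inner_add_left inner_add_right inner_commute algebra_simps power2_eq_square)

lemma prox_char:
  fixes h :: "'a::euclidean_space \<Rightarrow> ereal"
  assumes hp: "proper_fun h" and lsc: "lsc_fun h" and cvx: "ext_convex h" and eta: "\<eta> > 0"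
    and yd: "y = prox \<eta> h w"
  shows "h y = ereal (real_of_ereal (h y))"
    and "\<And>z. h z \<noteq> \<infinity> \<Longrightarrow>
           real_of_ereal (h y) + inner (w - y) (z - y) / \<eta> \<le> real_of_ereal (h z)"
proof -
  have ymin: "\<forall>z. h y + ereal (norm (y - w)^2 / (2*\<eta>)) \<le> h z + ereal (norm (z - w)^2 / (2*\<eta>))"
    unfolding yd prox_def by (rule someI_ex[OF prox_min_exists[OF hp lsc cvx eta]])
  obtain y0 where y0: "h y0 \<noteq> \<infinity>" using hp unfolding proper_fun_def by blast
  have "h y \<noteq> \<infinity>"
  proof
    assume "h y = \<infinity>"
    hence "h y0 + ereal (norm (y0 - w)^2 / (2*\<eta>)) = \<infinity>" using ymin[rule_format, of y0] by simp
    thus False using y0 hp unfolding proper_fun_def by (cases "h y0") auto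
  qed
  moreover have "h y \<noteq> -\<infinity>" using hp unfolding proper_fun_def by blast
  ultimately obtain Hy where Hy: "h y = ereal Hy" by (cases "h y") auto
  thus "h y = ereal (real_of_ereal (h y))" by simp
  fix z assume hz: "h z \<noteq> \<infinity>"
  moreover have "h z \<noteq> -\<infinity>" using hp unfolding proper_fun_def by blast
  ultimately obtain Hz where Hz: "h z = ereal Hz" by (cases "h z") auto
  have key: "Hy + inner (w - y) (z - y) / \<eta> - Hz \<le> u * (norm (z - y)^2 / (2*\<eta>))"
    if u: "0 < u" "u < 1" for u
  proof -
    define zu where "zu = u *\<^sub>R z + (1 - u) *\<^sub>R y"
    have hzu: "h zu \<le> ereal (u * Hz + (1 - u) * Hy)"
      unfolding zu_def by (rule ext_convex_fin[OF cvx u Hz Hy])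
    have "ereal Hy + ereal (norm (y - w)^2 / (2*\<eta>)) \<le> h zu + ereal (norm (zu - w)^2 / (2*\<eta>))"
      using ymin Hy by metis
    also have "\<dots> \<le> ereal (u * Hz + (1 - u) * Hy) + ereal (norm (zu - w)^2 / (2*\<eta>))"
      using hzu by (rule add_right_mono)
    finally have ineq: "Hy + norm (y - w)^2 / (2*\<eta>) \<le> u * Hz + (1 - u) * Hy + norm (zu - w)^2 / (2*\<eta>)"
      by simp
    have zw: "zu - w = (y - w) + u *\<^sub>R (z - y)" by (simp add: zu_def algebra_simps)
    have nz: "norm (zu - w)^2 = norm (y - w)^2 + 2 * u * inner (y - w) (z - y) + u^2 * norm (z - y)^2"
      unfolding zw by (rule norm_add_scale_sq)
    have "u * Hy \<le> u * Hz + (2 * u * inner (y - w) (z - y) + u^2 * norm (z - y)^2) / (2*\<eta>)"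
      using ineq unfolding nz add_divide_distrib left_diff_distrib mult_1_left by linarith
    also have "(2 * u * inner (y - w) (z - y) + u^2 * norm (z - y)^2) / (2*\<eta>)
        = u * (inner (y - w) (z - y) / \<eta> + u * (norm (z - y)^2 / (2*\<eta>)))"
      using eta by (simp add: field_simps power2_eq_square)
    finally have "u * Hy \<le> u * (Hz + inner (y - w) (z - y) / \<eta> + u * (norm (z - y)^2 / (2*\<eta>)))"
      by (simp add: algebra_simps)
    hence "Hy \<le> Hz + inner (y - w) (z - y) / \<eta> + u * (norm (z - y)^2 / (2*\<eta>))"
      using u by simp
    moreover have "inner (w - y) (z - y) = - inner (y - w) (z - y)"
      by (simp add: inner_diff_left)
    ultimately show ?thesis by simp
  qed
  have "Hy + inner (w - y) (z - y) / \<eta> - Hz \<le> 0"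
    by (rule small_lim[OF key]) (use eta in auto)
  thus "real_of_ereal (h y) + inner (w - y) (z - y) / \<eta> \<le> real_of_ereal (h z)"
    using Hy Hz by simp
qed



lemma descent1:
  fixes \<phi> :: "'a::euclidean_space \<Rightarrow> real" and g :: "'a \<Rightarrow> 'a"
  assumes der: "\<And>x. (\<phi> has_derivative (\<lambda>v. g x \<bullet> v)) (at x)"
    and lip: "\<And>x y. norm (g x - g y) \<le> L * norm (x - y)"
  shows "\<phi> y \<le> \<phi> x + g x \<bullet> (y - x) + L / 2 * norm (y - x)^2"
proof -
  define d where "d = y - x"
  define \<psi> where "\<psi> t = \<phi> (x + t *\<^sub>R d) - t * (g x \<bullet> d) - L / 2 * t^2 * norm d^2" for t
  have D: "DERIV \<psi> t :> (g (x + t *\<^sub>R d) \<bullet> d - g x \<bullet> d - L * t * norm d^2)" for t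
  proof -
    have "((\<lambda>t. x + t *\<^sub>R d) has_derivative (\<lambda>s. s *\<^sub>R d)) (at t)"
      by (auto intro!: derivative_eq_intros)
    from diff_chain_at[OF this der]
    have "((\<lambda>t. \<phi> (x + t *\<^sub>R d)) has_derivative (\<lambda>s. g (x + t *\<^sub>R d) \<bullet> (s *\<^sub>R d))) (at t)"
      by (simp add: o_def)
    moreover have "(\<lambda>s. g (x + t *\<^sub>R d) \<bullet> (s *\<^sub>R d)) = (*) (g (x + t *\<^sub>R d) \<bullet> d)"
      by (auto simp: fun_eq_iff)
    ultimately have "((\<lambda>t. \<phi> (x + t *\<^sub>R d)) has_field_derivative (g (x + t *\<^sub>R d) \<bullet> d)) (at t)"
      by (simp add: has_field_derivative_def)
    hence "DERIV \<psi> t :> (g (x + t *\<^sub>R d) \<bullet> d - 1 * (g x \<bullet> d) - L / 2 * (2 * t) * norm d^2)"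
      unfolding \<psi>_def by (auto intro!: derivative_eq_intros)
    thus ?thesis by simp
  qed
  have "\<psi> 1 \<le> \<psi> 0"
  proof (rule DERIV_nonpos_imp_nonincreasing[of 0 1 \<psi>])
    fix t :: real assume t: "0 \<le> t" "t \<le> 1"
    have "g (x + t *\<^sub>R d) \<bullet> d - g x \<bullet> d = (g (x + t *\<^sub>R d) - g x) \<bullet> d"
      by (simp add: inner_diff_left)
    also have "\<dots> \<le> norm (g (x + t *\<^sub>R d) - g x) * norm d" by (rule norm_cauchy_schwarz)
    also have "\<dots> \<le> (L * norm (t *\<^sub>R d)) * norm d"
      using lip[of "x + t *\<^sub>R d" x] by (intro mult_right_mono) auto
    also have "\<dots> = L * t * norm d^2" using t by (simp add: power2_eq_square)
    finally have "g (x + t *\<^sub>R d) \<bullet> d - g x \<bullet> d - L * t * norm d^2 \<le> 0" by simp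
    thus "\<exists>y. DERIV \<psi> t :> y \<and> y \<le> 0" using D[of t] by blast
  qed simp
  thus ?thesis by (simp add: \<psi>_def d_def)
qed

definition favg :: "nat \<Rightarrow> (nat \<Rightarrow> 'a \<Rightarrow> real) \<Rightarrow> 'a \<Rightarrow> real" where
  "favg n f x = (1 / real n) * (\<Sum>i<n. f i x)"

lemma descent_avg:
  fixes f :: "nat \<Rightarrow> 'a::euclidean_space \<Rightarrow> real" and gf :: "nat \<Rightarrow> 'a \<Rightarrow> 'a"
  assumes n: "n \<ge> 1"
    and grad: "\<And>i x. i < n \<Longrightarrow> (f i has_derivative (\<lambda>v. gf i x \<bullet> v)) (at x)"
    and smooth: "\<And>i x y. i < n \<Longrightarrow> norm (gf i x - gf i y) \<le> L * norm (x - y)"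
  shows "favg n f y \<le> favg n f x + full_grad n gf x \<bullet> (y - x) + L / 2 * norm (y - x)^2"
proof -
  have "(\<Sum>i<n. f i y) \<le> (\<Sum>i<n. f i x + gf i x \<bullet> (y - x) + L / 2 * norm (y - x)^2)"
    by (intro sum_mono descent1 grad smooth) auto
  also have "\<dots> = (\<Sum>i<n. f i x) + (\<Sum>i<n. gf i x) \<bullet> (y - x) + real n * (L / 2 * norm (y - x)^2)"
    by (simp add: sum.distrib inner_sum_left)
  finally have "(1 / real n) * (\<Sum>i<n. f i y) \<le> (1 / real n) * ((\<Sum>i<n. f i x) + (\<Sum>i<n. gf i x) \<bullet> (y - x) + real n * (L / 2 * norm (y - x)^2))"
    by (intro mult_left_mono) auto
  thus ?thesis using n by (simp add: favg_def full_grad_def distrib_left)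
qed



locale saga_setting =
  fixes n :: nat and L :: real
    and f :: "nat \<Rightarrow> 'a::euclidean_space \<Rightarrow> real" and gf :: "nat \<Rightarrow> 'a \<Rightarrow> 'a"
    and h :: "'a \<Rightarrow> ereal"
  assumes n_pos: "n \<ge> 1"
    and L_pos: "L > 0"
    and grad: "\<And>i x. i < n \<Longrightarrow> (f i has_derivative (\<lambda>v. gf i x \<bullet> v)) (at x)"
    and smooth: "\<And>i x y. i < n \<Longrightarrow> norm (gf i x - gf i y) \<le> L * norm (x - y)"
    and h_proper: "proper_fun h" and h_lsc: "lsc_fun h" and h_convex: "ext_convex h"
begin

abbreviation H where "H x \<equiv> real_of_ereal (h x)"

lemma prox_fin: "\<eta> > 0 \<Longrightarrow> h (prox \<eta> h w) = ereal (H (prox \<eta> h w))"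
  using prox_char(1)[OF h_proper h_lsc h_convex] by blast

lemma prox_ineq: "\<eta> > 0 \<Longrightarrow> h z \<noteq> \<infinity> \<Longrightarrow>
   H (prox \<eta> h w) + inner (w - prox \<eta> h w) (z - prox \<eta> h w) / \<eta> \<le> H z"
  using prox_char(2)[OF h_proper h_lsc h_convex] by blast

lemma one_step_descent:
  fixes x v :: 'a and \<eta> :: real
  assumes eta: "\<eta> > 0" and hx: "h x \<noteq> \<infinity>"
  defines "y \<equiv> prox \<eta> h (x - \<eta> *\<^sub>R v)"
    and "yb \<equiv> prox \<eta> h (x - \<eta> *\<^sub>R full_grad n gf x)"
  shows "favg n f y + H y \<le> favg n f x + H x + \<eta> / 2 * norm (full_grad n gf x - v)^2
           + L / 2 * norm (y - x)^2 - (1/2) * (norm (y - x)^2 / \<eta>) - (1/2) * (norm (yb - x)^2 / \<eta>)"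
proof -
  define g where "g = full_grad n gf x"
  define d where "d = y - x"
  define e where "e = yb - x"
  have hyb: "h yb \<noteq> \<infinity>" using prox_fin[OF eta, of "x - \<eta> *\<^sub>R full_grad n gf x"] yb_def by (metis PInfty_neq_ereal(1))
  have F1: "H y \<le> H yb + inner d e / \<eta> - norm d^2 / \<eta> + inner v e - inner v d"
  proof -
    have "H y + inner ((x - \<eta> *\<^sub>R v) - y) (yb - y) / \<eta> \<le> H yb"
      unfolding y_def by (rule prox_ineq[OF eta hyb])
    moreover have "inner ((x - \<eta> *\<^sub>R v) - y) (yb - y) = - inner d e + norm d^2 - \<eta> * inner v e + \<eta> * inner v d"
    proof -
      have eqs: "(x - \<eta> *\<^sub>R v) - y = - d - \<eta> *\<^sub>R v" "yb - y = e - d" by (auto simp: d_def e_def)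
      show ?thesis unfolding eqs by (simp add: inner_diff_left inner_diff_right inner_commute power2_norm_eq_inner algebra_simps)
    qed
    ultimately show ?thesis using eta by (simp add: add_divide_distrib diff_divide_distrib)
  qed
  have F2: "H yb \<le> H x - norm e^2 / \<eta> - inner g e"
  proof -
    have "H yb + inner ((x - \<eta> *\<^sub>R g) - yb) (x - yb) / \<eta> \<le> H x"
      unfolding yb_def g_def by (rule prox_ineq[OF eta hx])
    moreover have "inner ((x - \<eta> *\<^sub>R g) - yb) (x - yb) = norm e^2 + \<eta> * inner g e"
    proof -
      have eqs: "(x - \<eta> *\<^sub>R g) - yb = - e - \<eta> *\<^sub>R g" "x - yb = - e" by (auto simp: e_def)
      show ?thesis unfolding eqs by (simp add: inner_diff_left inner_diff_right inner_commute power2_norm_eq_inner algebra_simps)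
    qed
    ultimately show ?thesis using eta by (simp add: add_divide_distrib)
  qed
  have F3: "favg n f y \<le> favg n f x + inner g d + L / 2 * norm d^2"
    unfolding g_def d_def by (rule descent_avg[OF n_pos grad smooth])
  have F4: "inner g d - inner g e - inner v d + inner v e
      \<le> \<eta> / 2 * norm (g - v)^2 + (1/2) * (norm d^2 / \<eta>) - inner d e / \<eta> + (1/2) * (norm e^2 / \<eta>)"
  proof -
    have "0 \<le> norm (\<eta> *\<^sub>R (g - v) - (d - e))^2" by simp
    also have "\<dots> = \<eta>^2 * norm (g - v)^2 - 2 * \<eta> * (inner g d - inner g e - inner v d + inner v e)
         + (norm d^2 - 2 * inner d e + norm e^2)"
      unfolding power2_norm_eq_inner by (simp add: inner_diff_left inner_diff_right inner_commute algebra_simps power2_eq_square)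
    finally have "2 * \<eta> * (inner g d - inner g e - inner v d + inner v e)
       \<le> \<eta>^2 * norm (g - v)^2 + (norm d^2 - 2 * inner d e + norm e^2)" by simp
    hence "(2 * \<eta> * (inner g d - inner g e - inner v d + inner v e)) / (2 * \<eta>)
       \<le> (\<eta>^2 * norm (g - v)^2 + (norm d^2 - 2 * inner d e + norm e^2)) / (2 * \<eta>)"
      using eta by (intro divide_right_mono) auto
    thus ?thesis using eta by (simp add: field_simps power2_eq_square)
  qed
  show ?thesis using F1 F2 F3 F4 unfolding g_def[symmetric] d_def[symmetric] e_def[symmetric] by linarith
qed

end



lemma sum_PiE_insert:
  fixes F :: "('a \<Rightarrow> 'b) \<Rightarrow> 'c::comm_monoid_add"
  assumes "finite A" "k \<notin> A" "\<And>x. finite (B x)"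
  shows "(\<Sum>g\<in>PiE (insert k A) B. F g) = (\<Sum>y\<in>B k. \<Sum>g\<in>PiE A B. F (g(k := y)))"
proof -
  have "(\<Sum>g\<in>PiE (insert k A) B. F g) = (\<Sum>(y,g)\<in>B k \<times> PiE A B. F (g(k := y)))"
    using assms
    by (intro sum.reindex_bij_witness[of _ "\<lambda>(y,g). g(k := y)" "\<lambda>g. (g k, g(k := undefined))"])
       (auto simp: PiE_def extensional_def)
  also have "\<dots> = (\<Sum>y\<in>B k. \<Sum>g\<in>PiE A B. F (g(k := y)))"
    by (subst sum.cartesian_product) auto
  finally show ?thesis .
qed

lemma variance_PiE:
  fixes Z :: "'b \<Rightarrow> 'v::real_inner"
  assumes K: "finite K" and A: "finite A" and Z0: "(\<Sum>a\<in>A. Z a) = 0"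
  shows "real (card A) * (\<Sum>I\<in>PiE K (\<lambda>_. A). norm (\<Sum>j\<in>K. Z (I j))^2)
         = real (card K) * real (card (PiE K (\<lambda>_. A))) * (\<Sum>a\<in>A. norm (Z a)^2)"
  using K
proof (induction K rule: finite_induct)
  case empty
  thus ?case by simp
next
  case (insert k K)
  define S where "S I = (\<Sum>j\<in>K. Z (I j))" for I
  have eqS: "(\<Sum>j\<in>insert k K. Z ((I(k := a)) j)) = Z a + S I" for I a
  proof -
    have "(\<Sum>j\<in>K. Z ((I(k := a)) j)) = S I" unfolding S_def
      using insert.hyps by (intro sum.cong) auto
    thus ?thesis using insert.hyps by simp
  qed
  have "(\<Sum>I\<in>PiE (insert k K) (\<lambda>_. A). norm (\<Sum>j\<in>insert k K. Z (I j))^2)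
      = (\<Sum>a\<in>A. \<Sum>I\<in>PiE K (\<lambda>_. A). norm (\<Sum>j\<in>insert k K. Z ((I(k := a)) j))^2)"
    by (rule sum_PiE_insert) (use insert.hyps A in auto)
  also have "\<dots> = (\<Sum>a\<in>A. \<Sum>I\<in>PiE K (\<lambda>_. A). norm (Z a + S I)^2)"
    by (simp only: eqS)
  also have "\<dots> = (\<Sum>I\<in>PiE K (\<lambda>_. A). \<Sum>a\<in>A. norm (S I)^2 + 2 * inner (S I) (Z a) + norm (Z a)^2)"
    by (subst sum.swap) (simp add: power2_norm_eq_inner inner_add_left inner_add_right inner_commute algebra_simps)
  also have "\<dots> = (\<Sum>I\<in>PiE K (\<lambda>_. A). real (card A) * norm (S I)^2 + 2 * inner (S I) (\<Sum>a\<in>A. Z a) + (\<Sum>a\<in>A. norm (Z a)^2))"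
    by (simp add: sum.distrib inner_sum_right sum_distrib_left)
  also have "\<dots> = real (card A) * (\<Sum>I\<in>PiE K (\<lambda>_. A). norm (S I)^2) + real (card (PiE K (\<lambda>_. A))) * (\<Sum>a\<in>A. norm (Z a)^2)"
    by (simp add: Z0 sum.distrib sum_distrib_left)
  finally have eq: "(\<Sum>I\<in>PiE (insert k K) (\<lambda>_. A). norm (\<Sum>j\<in>insert k K. Z (I j))^2) = \<dots>" .
  have cardI: "card (PiE (insert k K) (\<lambda>_. A)) = card A * card (PiE K (\<lambda>_. A))"
    using insert.hyps A by (simp add: card_PiE)
  show ?case
    unfolding eq using insert.IH insert.hyps cardI
    by (simp add: S_def algebra_simps)
qed

lemma centered_le:
  fixes W :: "nat \<Rightarrow> 'v::real_inner"
  shows "(\<Sum>i<n. norm (W i - (1 / real n) *\<^sub>R (\<Sum>k<n. W k))^2) \<le> (\<Sum>i<n. norm (W i)^2)"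
proof (cases "n = 0")
  case True thus ?thesis by simp
next
  case False
  define m where "m = (1 / real n) *\<^sub>R (\<Sum>k<n. W k)"
  have sm: "(\<Sum>k<n. W k) = real n *\<^sub>R m" using False by (simp add: m_def)
  have "(\<Sum>i<n. norm (W i - m)^2) = (\<Sum>i<n. norm (W i)^2 - 2 * inner (W i) m + norm m^2)"
    by (intro sum.cong) (simp_all add: power2_norm_eq_inner inner_diff_left inner_diff_right inner_commute)
  also have "\<dots> = (\<Sum>i<n. norm (W i)^2) - 2 * inner (\<Sum>k<n. W k) m + real n * norm m^2"
    by (simp add: sum.distrib sum_subtractf inner_sum_left sum_distrib_left)
  also have "\<dots> = (\<Sum>i<n. norm (W i)^2) - real n * norm m^2"
    by (simp add: sm power2_norm_eq_inner)
  also have "\<dots> \<le> (\<Sum>i<n. norm (W i)^2)" by simp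
  finally show ?thesis by (simp add: m_def)
qed

lemma card_avoid:
  assumes "finite K" "finite A"
  shows "card {J \<in> PiE K (\<lambda>_. A). i \<notin> J ` K} = card (A - {i}) ^ card K"
proof -
  have "{J \<in> PiE K (\<lambda>_. A). i \<notin> J ` K} = PiE K (\<lambda>_. A - {i})"
    by (auto simp: PiE_def Pi_def)
  thus ?thesis using assms by (simp add: card_PiE)
qed



lemma pq_facts:
  fixes n b :: nat
  assumes n: "n \<ge> 1" and b: "b \<ge> 1" and bn: "real b ^ 3 = real n ^ 2"
  defines "q \<equiv> ((real n - 1) / real n) ^ b"
  defines "p \<equiv> 1 - q"
  shows "b \<le> n" "0 \<le> q" "q < 1" "0 < p" "p \<le> 1" "p + 2 * q^2 \<le> 10 * real b * p^2"
    "p \<ge> real b / (2 * real n)"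
proof -
  have "real n ^ 2 \<le> real n ^ 3" using n by (intro power_increasing) auto
  hence b3: "real b ^ 3 \<le> real n ^ 3" using bn by simp
  have "real b \<le> real n"
  proof (rule ccontr)
    assume "\<not> real b \<le> real n"
    hence "real n < real b" by simp
    hence "real n ^ 3 < real b ^ 3" by (intro power_strict_mono) auto
    thus False using b3 by simp
  qed
  thus bln: "b \<le> n" by simp
  have r01: "0 \<le> (real n - 1) / real n" "(real n - 1) / real n < 1" using n by (auto simp: field_simps)
  show q0: "0 \<le> q" unfolding q_def using r01 by simp
  have "q \<le> (real n - 1) / real n" unfolding q_def using r01 b
    by (metis power_decreasing power_one_right less_imp_le)
  thus q1: "q < 1" using r01 by linarith
  show "0 < p" "p \<le> 1" using q0 q1 by (auto simp: p_def)
  define t where "t = real b / real n"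
  have t: "0 < t" "t \<le> 1" using n b bln by (auto simp: t_def)
  have bern: "1 + real b * (1 / real n) \<le> (1 + 1 / real n) ^ b"
  proof (rule Bernoulli_inequality)
    have "0 \<le> 1 / real n" by simp
    thus "- 1 \<le> 1 / real n" by linarith
  qed
  have "q * (1 + 1 / real n) ^ b = (((real n - 1) / real n) * (1 + 1 / real n)) ^ b"
    unfolding q_def by (rule power_mult_distrib[symmetric])
  also have "\<dots> \<le> 1"
  proof (rule power_le_one)
    show "0 \<le> (real n - 1) / real n * (1 + 1 / real n)" using r01(1) by (intro mult_nonneg_nonneg) auto
    have "(real n - 1) / real n * (1 + 1 / real n) = 1 - 1 / real n ^ 2"
      using n by (simp add: field_simps power2_eq_square)
    thus "(real n - 1) / real n * (1 + 1 / real n) \<le> 1" by simp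
  qed
  finally have "q * (1 + 1 / real n) ^ b \<le> 1" .
  moreover have "q * (1 + t) \<le> q * (1 + 1 / real n) ^ b"
    using bern q0 by (intro mult_left_mono) (auto simp: t_def)
  ultimately have qt: "q * (1 + t) \<le> 1" by linarith
  have "(1 - t / 2) * (1 + t) \<ge> 1" using t by (simp add: algebra_simps power2_eq_square mult_le_cancel_left1)
  moreover have "(1 - t / 2 - q) * (1 + t) = (1 - t / 2) * (1 + t) - q * (1 + t)" by (simp add: algebra_simps)
  ultimately have "(1 - t / 2 - q) * (1 + t) \<ge> 0" using qt by linarith
  hence "1 - t / 2 - q \<ge> 0" using t by (simp add: zero_le_mult_iff)
  thus pb: "p \<ge> real b / (2 * real n)" unfolding p_def t_def by simp
  have "p^2 \<ge> (real b / (2 * real n))^2" using pb b by (intro power_mono) auto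
  hence "10 * real b * p^2 \<ge> 10 * real b * (real b / (2 * real n))^2" using b by simp
  moreover have "10 * real b * (real b / (2 * real n))^2 = 10 * real b ^ 3 / (4 * real n ^ 2)"
    by (simp add: field_simps power2_eq_square power3_eq_cube)
  moreover have "\<dots> = 10 / 4" using bn n by simp
  ultimately have "10 * real b * p^2 \<ge> 10 / 4" by simp
  moreover have "q^2 \<le> q"
  proof -
    have "q * q \<le> q * 1" using q0 q1 by (intro mult_left_mono) auto
    thus ?thesis by (simp add: power2_eq_square)
  qed
  ultimately show "p + 2 * q^2 \<le> 10 * real b * p^2" unfolding p_def using q0 q1 by linarith
qed



lemma young_q:
  fixes a b :: "'v::real_inner" and q p :: real
  assumes "q \<ge> 0" "p > 0"
  shows "q * norm (a + b)^2 \<le> (q + p / 2) * norm b^2 + (q + 2 * q^2 / p) * norm a^2"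
proof -
  have "norm (a + b)^2 \<le> norm a^2 + norm b^2 + 2 * (norm a * norm b)"
  proof -
    have "norm (a + b)^2 = norm a^2 + norm b^2 + 2 * inner a b"
      unfolding power2_norm_eq_inner by (simp add: inner_add_left inner_add_right inner_commute)
    moreover have "inner a b \<le> norm a * norm b" by (rule norm_cauchy_schwarz)
    ultimately show ?thesis by linarith
  qed
  hence "q * norm (a + b)^2 \<le> q * (norm a^2 + norm b^2 + 2 * (norm a * norm b))"
    using assms(1) by (simp add: mult_left_mono)
  moreover have "2 * q * (norm a * norm b) \<le> p / 2 * norm b^2 + 2 * q^2 / p * norm a^2"
  proof -
    have "0 \<le> p / 2 * (norm b - 2 * q / p * norm a)^2" using assms by simp
    also have "\<dots> = p / 2 * norm b^2 - 2 * q * (norm a * norm b) + 2 * q^2 / p * norm a^2"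
      using assms by (simp add: field_simps power2_eq_square)
    finally show ?thesis by simp
  qed
  ultimately show ?thesis by (simp add: algebra_simps)
qed

locale saga_alg = saga_setting n L f gf h for n L f gf h +
  fixes b :: nat
  assumes b_pos: "b \<ge> 1" and bn: "real b ^ 3 = real n ^ 2"
begin

definition "eta = 1 / (5 * L)"
definition "qq = ((real n - 1) / real n) ^ b"
definition "pp = 1 - qq"
definition "cc = L / (5 * real b * pp)"
definition "Dist x \<alpha> = (1 / real n) * (\<Sum>i<n. norm (x - \<alpha> i)^2)"
definition "Phi st = favg n f (fst st) + H (fst st) + cc * Dist (fst st) (snd st)"
definition "vv x \<alpha> I = (1 / real b) *\<^sub>R (\<Sum>j<b. gf (I j) x - gf (I j) (\<alpha> (I j)))
                      + (1 / real n) *\<^sub>R (\<Sum>i<n. gf i (\<alpha> i))"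
definition "upd x \<alpha> J = (\<lambda>i. if i \<in> J ` {..<b} then x else \<alpha> i)"

abbreviation "SS \<equiv> {..<b} \<rightarrow>\<^sub>E {..<n}"

lemma eta_pos: "eta > 0" using L_pos by (simp add: eta_def)

lemma pq: "b \<le> n" "0 \<le> qq" "qq < 1" "0 < pp" "pp \<le> 1" "pp + 2 * qq^2 \<le> 10 * real b * pp^2"
  using pq_facts[OF n_pos b_pos bn] unfolding qq_def pp_def by auto

lemma cc_pos: "cc > 0" using pq L_pos b_pos by (simp add: cc_def)

lemma cc_bound: "cc * (1 + 2 * qq^2 / pp) \<le> 2 * L"
proof -
  have "cc * (1 + 2 * qq^2 / pp) = L * ((pp + 2 * qq^2) / (5 * real b * pp^2))"
    using pq b_pos by (simp add: cc_def field_simps power2_eq_square)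
  also have "\<dots> \<le> L * (10 * real b * pp^2 / (5 * real b * pp^2))"
    using pq b_pos L_pos by (intro mult_left_mono divide_right_mono) auto
  also have "\<dots> = 2 * L" using pq b_pos by simp
  finally show ?thesis .
qed

lemma step_eq: "saga_step n b eta gf h (I, J) (x, \<alpha>) = (prox eta h (x - eta *\<^sub>R vv x \<alpha> I), upd x \<alpha> J)"
  by (simp add: saga_step_def Let_def vv_def upd_def)

lemma card_SS: "card SS = n ^ b" by (simp add: card_PiE)

lemma var_bound:
  "(\<Sum>I\<in>SS. norm (full_grad n gf x - vv x \<alpha> I)^2) \<le> real (card SS) * (L^2 / real b) * Dist x \<alpha>"
proof -
  define W where "W i = gf i x - gf i (\<alpha> i)" for i
  define m where "m = (1 / real n) *\<^sub>R (\<Sum>k<n. W k)"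
  define Z where "Z i = W i - m" for i
  have nz: "real n \<noteq> 0" "real b \<noteq> 0" using n_pos b_pos by auto
  have Z0: "(\<Sum>a<n. Z a) = 0" using nz by (simp add: Z_def sum_subtractf m_def sum_constant_scaleR)
  have vI: "full_grad n gf x - vv x \<alpha> I = - ((1 / real b) *\<^sub>R (\<Sum>j<b. Z (I j)))" for I
  proof -
    have "(\<Sum>j<b. Z (I j)) = (\<Sum>j<b. W (I j)) - real b *\<^sub>R m" by (simp add: Z_def sum_subtractf sum_constant_scaleR)
    hence "(1 / real b) *\<^sub>R (\<Sum>j<b. Z (I j)) = (1 / real b) *\<^sub>R (\<Sum>j<b. W (I j)) - m"
      using nz by (simp add: scaleR_diff_right)
    moreover have "m = full_grad n gf x - (1 / real n) *\<^sub>R (\<Sum>i<n. gf i (\<alpha> i))"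
      by (simp add: m_def W_def full_grad_def sum_subtractf scaleR_diff_right)
    ultimately show ?thesis by (simp add: vv_def W_def algebra_simps)
  qed
  have e1: "(\<Sum>I\<in>SS. norm (full_grad n gf x - vv x \<alpha> I)^2)
        = (1 / real b)^2 * (\<Sum>I\<in>SS. norm (\<Sum>j<b. Z (I j))^2)"
    by (simp add: vI sum_distrib_left power_divide)
  have e2: "(\<Sum>I\<in>SS. norm (\<Sum>j<b. Z (I j))^2) = real b * real (card SS) * (\<Sum>a<n. norm (Z a)^2) / real n"
    using variance_PiE[of "{..<b}" "{..<n}" Z] Z0 nz by (simp add: field_simps)
  have e3: "(\<Sum>I\<in>SS. norm (full_grad n gf x - vv x \<alpha> I)^2)
        = real (card SS) / (real b * real n) * (\<Sum>a<n. norm (Z a)^2)"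
    unfolding e1 e2 using nz by (simp add: field_simps power2_eq_square)
  have "(\<Sum>a<n. norm (Z a)^2) \<le> (\<Sum>a<n. norm (W a)^2)"
    unfolding Z_def m_def by (rule centered_le)
  also have "(\<Sum>a<n. norm (W a)^2) \<le> (\<Sum>a<n. L^2 * norm (x - \<alpha> a)^2)"
  proof (rule sum_mono)
    fix a assume "a \<in> {..<n}"
    hence "norm (W a) \<le> L * norm (x - \<alpha> a)" unfolding W_def using smooth by simp
    hence "norm (W a)^2 \<le> (L * norm (x - \<alpha> a))^2" by (intro power_mono) auto
    thus "norm (W a)^2 \<le> L^2 * norm (x - \<alpha> a)^2" by (simp add: power_mult_distrib)
  qed
  finally have "real (card SS) / (real b * real n) * (\<Sum>a<n. norm (Z a)^2)
      \<le> real (card SS) / (real b * real n) * (\<Sum>a<n. L^2 * norm (x - \<alpha> a)^2)"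
    by (intro mult_left_mono) auto
  also have "\<dots> = real (card SS) * (L^2 / real b) * Dist x \<alpha>"
    using nz by (simp add: Dist_def sum_distrib_left[symmetric])
  finally show ?thesis unfolding e3 .
qed

end



context saga_alg
begin

lemma J_avg:
  fixes x y :: 'a
  assumes i: "i < n"
  shows "(\<Sum>J\<in>SS. norm (y - upd x \<alpha> J i)^2)
         = real (card SS) * ((1 - qq) * norm (y - x)^2 + qq * norm (y - \<alpha> i)^2)"
proof -
  define P where "P J = (i \<in> J ` {..<b})" for J :: "nat \<Rightarrow> nat"
  have fin: "finite SS" by (simp add: finite_PiE)
  have "(\<Sum>J\<in>SS. norm (y - upd x \<alpha> J i)^2) = (\<Sum>J\<in>SS. if P J then norm (y - x)^2 else norm (y - \<alpha> i)^2)"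
    by (intro sum.cong) (auto simp: upd_def P_def)
  also have "\<dots> = (\<Sum>J\<in>SS \<inter> {J. P J}. norm (y - x)^2) + (\<Sum>J\<in>SS \<inter> - {J. P J}. norm (y - \<alpha> i)^2)"
    by (rule sum.If_cases[OF fin])
  also have "\<dots> = real (card (SS \<inter> {J. P J})) * norm (y - x)^2 + real (card (SS \<inter> - {J. P J})) * norm (y - \<alpha> i)^2"
    by simp
  finally have e1: "(\<Sum>J\<in>SS. norm (y - upd x \<alpha> J i)^2) = \<dots>" .
  have "SS \<inter> - {J. P J} = {J \<in> SS. i \<notin> J ` {..<b}}" by (auto simp: P_def)
  hence c0: "card (SS \<inter> - {J. P J}) = (n - 1) ^ b"
    using card_avoid[of "{..<b}" "{..<n}" i] i by simp
  have "SS \<inter> {J. P J} = SS - (SS \<inter> - {J. P J})" by auto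
  hence "card (SS \<inter> {J. P J}) = card SS - card (SS \<inter> - {J. P J})"
    using fin by (simp add: card_Diff_subset)
  moreover have "card (SS \<inter> - {J. P J}) \<le> card SS" using fin by (intro card_mono) auto
  ultimately have c1: "real (card (SS \<inter> {J. P J})) = real (card SS) - real (card (SS \<inter> - {J. P J}))"
    by simp
  have qn: "real ((n - 1) ^ b) = qq * real (card SS)"
    using n_pos by (simp add: card_SS qq_def power_divide of_nat_diff)
  show ?thesis unfolding e1 c1 c0 qn by (simp add: algebra_simps)
qed

lemma J_bound:
  fixes x y :: 'a
  shows "(\<Sum>J\<in>SS. Dist y (upd x \<alpha> J))
    \<le> real (card SS) * ((1 + 2 * qq^2 / pp) * norm (y - x)^2 + (1 - pp / 2) * Dist x \<alpha>)"
proof -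
  have "(\<Sum>J\<in>SS. Dist y (upd x \<alpha> J)) = (1 / real n) * (\<Sum>i<n. \<Sum>J\<in>SS. norm (y - upd x \<alpha> J i)^2)"
    unfolding Dist_def by (simp add: sum_divide_distrib[symmetric] sum.swap[of _ SS])
  also have "\<dots> = (1 / real n) * (\<Sum>i<n. real (card SS) * ((1 - qq) * norm (y - x)^2 + qq * norm (y - \<alpha> i)^2))"
    by (simp add: J_avg)
  also have "\<dots> \<le> (1 / real n) * (\<Sum>i<n. real (card SS) * ((1 + 2 * qq^2 / pp) * norm (y - x)^2 + (1 - pp / 2) * norm (x - \<alpha> i)^2))"
  proof (rule mult_left_mono, rule sum_mono)
    fix i
    have "qq * norm ((y - x) + (x - \<alpha> i))^2 \<le> (qq + pp / 2) * norm (x - \<alpha> i)^2 + (qq + 2 * qq^2 / pp) * norm (y - x)^2"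
      by (rule young_q[of qq pp "y - x" "x - \<alpha> i"]) (use pq in auto)
    moreover have "qq + pp / 2 = 1 - pp / 2" by (simp add: pp_def field_simps)
    ultimately have "(1 - qq) * norm (y - x)^2 + qq * norm (y - \<alpha> i)^2
        \<le> (1 + 2 * qq^2 / pp) * norm (y - x)^2 + (1 - pp / 2) * norm (x - \<alpha> i)^2"
      by (simp add: algebra_simps)
    thus "real (card SS) * ((1 - qq) * norm (y - x)^2 + qq * norm (y - \<alpha> i)^2)
        \<le> real (card SS) * ((1 + 2 * qq^2 / pp) * norm (y - x)^2 + (1 - pp / 2) * norm (x - \<alpha> i)^2)"
      by (intro mult_left_mono) auto
  qed simp
  also have "\<dots> = real (card SS) * ((1 + 2 * qq^2 / pp) * norm (y - x)^2 + (1 - pp / 2) * Dist x \<alpha>)"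
  proof -
    define A where "A = (1 + 2 * qq^2 / pp) * norm (y - x)^2"
    define B where "B = 1 - pp / 2"
    have "(\<Sum>i<n. real (card SS) * (A + B * norm (x - \<alpha> i)^2))
        = real (card SS) * (real n * A + B * (\<Sum>i<n. norm (x - \<alpha> i)^2))"
      by (simp add: sum.distrib sum_distrib_left[symmetric] distrib_left)
    thus ?thesis using n_pos unfolding A_def[symmetric] B_def[symmetric] Dist_def
      by (simp add: field_simps)
  qed
  finally show ?thesis .
qed

end



context saga_alg
begin

lemma step_bound:
  fixes x :: 'a
  assumes hx: "h x \<noteq> \<infinity>"
  shows "(\<Sum>IJ\<in>SS \<times> SS. Phi (saga_step n b eta gf h IJ (x, \<alpha>)))
     \<le> real (card (SS \<times> SS)) * (Phi (x, \<alpha>) - 3 / (50 * L) * norm (grad_map n gf h eta x)^2)"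
proof -
  define N where "N = real (card SS)"
  define g where "g = full_grad n gf x"
  define yb where "yb = prox eta h (x - eta *\<^sub>R g)"
  define D where "D = Dist x \<alpha>"
  define Fx where "Fx = favg n f x + H x"
  define Gt where "Gt = (1/2) * (norm (yb - x)^2 / eta)"
  have N0: "N \<ge> 0" by (simp add: N_def)
  have perI: "(\<Sum>J\<in>SS. Phi (saga_step n b eta gf h (I, J) (x, \<alpha>)))
      \<le> N * (Fx + eta / 2 * norm (g - vv x \<alpha> I)^2 - Gt + cc * (1 - pp / 2) * D)" for I
  proof -
    define y where "y = prox eta h (x - eta *\<^sub>R vv x \<alpha> I)"
    have "(\<Sum>J\<in>SS. Phi (saga_step n b eta gf h (I, J) (x, \<alpha>)))
        = (\<Sum>J\<in>SS. favg n f y + H y + cc * Dist y (upd x \<alpha> J))"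
      by (simp add: step_eq Phi_def y_def)
    also have "\<dots> = N * (favg n f y + H y) + cc * (\<Sum>J\<in>SS. Dist y (upd x \<alpha> J))"
      by (simp add: sum.distrib sum_distrib_left N_def algebra_simps)
    also have "\<dots> \<le> N * (favg n f y + H y) + cc * (N * ((1 + 2 * qq^2 / pp) * norm (y - x)^2 + (1 - pp / 2) * D))"
      using J_bound[of y x \<alpha>] cc_pos unfolding N_def D_def by (intro add_left_mono mult_left_mono) auto
    also have "\<dots> = N * (favg n f y + H y + cc * (1 + 2 * qq^2 / pp) * norm (y - x)^2 + cc * (1 - pp / 2) * D)"
      by (simp add: algebra_simps)
    also have "\<dots> \<le> N * (Fx + eta / 2 * norm (g - vv x \<alpha> I)^2 - Gt + cc * (1 - pp / 2) * D)"
    proof (rule mult_left_mono[OF _ N0])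
      have desc: "favg n f y + H y \<le> favg n f x + H x + eta / 2 * norm (g - vv x \<alpha> I)^2
           + L / 2 * norm (y - x)^2 - (1/2) * (norm (y - x)^2 / eta) - Gt"
        unfolding y_def g_def Gt_def yb_def by (rule one_step_descent[OF eta_pos hx])
      have "norm (y - x)^2 / eta = 5 * L * norm (y - x)^2" by (simp add: eta_def)
      moreover have "cc * (1 + 2 * qq^2 / pp) * norm (y - x)^2 \<le> 2 * L * norm (y - x)^2"
        using cc_bound by (intro mult_right_mono) auto
      ultimately show "favg n f y + H y + cc * (1 + 2 * qq^2 / pp) * norm (y - x)^2 + cc * (1 - pp / 2) * D
          \<le> Fx + eta / 2 * norm (g - vv x \<alpha> I)^2 - Gt + cc * (1 - pp / 2) * D"
        using desc unfolding Fx_def by linarith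
    qed
    finally show ?thesis .
  qed
  have "(\<Sum>IJ\<in>SS \<times> SS. Phi (saga_step n b eta gf h IJ (x, \<alpha>)))
      = (\<Sum>I\<in>SS. \<Sum>J\<in>SS. Phi (saga_step n b eta gf h (I, J) (x, \<alpha>)))"
    by (simp add: sum.cartesian_product)
  also have "\<dots> \<le> (\<Sum>I\<in>SS. N * (Fx + eta / 2 * norm (g - vv x \<alpha> I)^2 - Gt + cc * (1 - pp / 2) * D))"
    by (intro sum_mono perI)
  also have "\<dots> = N * (N * (Fx - Gt + cc * (1 - pp / 2) * D)) + N * (eta / 2) * (\<Sum>I\<in>SS. norm (g - vv x \<alpha> I)^2)"
  proof -
    define K where "K = Fx - Gt + cc * (1 - pp / 2) * D"
    have "(\<Sum>I\<in>SS. N * (Fx + eta / 2 * norm (g - vv x \<alpha> I)^2 - Gt + cc * (1 - pp / 2) * D))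
        = (\<Sum>I\<in>SS. N * K + N * (eta / 2) * norm (g - vv x \<alpha> I)^2)"
      by (intro sum.cong) (simp_all add: K_def algebra_simps)
    also have "\<dots> = N * (N * K) + N * (eta / 2) * (\<Sum>I\<in>SS. norm (g - vv x \<alpha> I)^2)"
      by (simp only: sum.distrib sum_distrib_left[symmetric] sum_constant) (simp add: N_def)
    finally show ?thesis by (simp add: K_def)
  qed
  also have "\<dots> \<le> N * (N * (Fx - Gt + cc * (1 - pp / 2) * D)) + N * (eta / 2) * (N * (L^2 / real b) * D)"
    using var_bound[of x \<alpha>] N0 eta_pos unfolding g_def N_def D_def
    by (intro add_left_mono mult_left_mono) auto
  also have "\<dots> = N * N * (Fx + cc * D - Gt)"
  proof -
    have e: "eta / 2 * (L^2 / real b) = cc * pp / 2"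
      using pq L_pos b_pos by (simp add: eta_def cc_def field_simps power2_eq_square)
    have "N * (eta / 2) * (N * (L^2 / real b) * D) = N * N * D * (eta / 2 * (L^2 / real b))"
      by (simp add: algebra_simps)
    also have "\<dots> = N * N * D * (cc * pp / 2)" by (simp only: e)
    finally have e2: "N * (eta / 2) * (N * (L^2 / real b) * D) = N * N * D * (cc * pp / 2)" .
    show ?thesis unfolding e2 by (simp add: algebra_simps)
  qed
  also have "\<dots> \<le> N * N * (Fx + cc * D - 3 / (50 * L) * norm (grad_map n gf h eta x)^2)"
  proof -
    have "grad_map n gf h eta x = (1 / eta) *\<^sub>R (x - yb)"
      by (simp add: grad_map_def yb_def g_def)
    hence "norm (grad_map n gf h eta x)^2 = norm (x - yb)^2 / eta^2"
      using eta_pos by (simp add: power_divide)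
    also have "\<dots> = norm (yb - x)^2 * (25 * L^2)"
      using L_pos by (simp add: eta_def norm_minus_commute field_simps power2_eq_square)
    finally have nG: "norm (grad_map n gf h eta x)^2 = norm (yb - x)^2 * (25 * L^2)" .
    have "3 / (50 * L) * norm (grad_map n gf h eta x)^2 = 3 / 2 * (L * norm (yb - x)^2)"
      unfolding nG using L_pos by (simp add: field_simps power2_eq_square)
    moreover have "Gt = 5 / 2 * (L * norm (yb - x)^2)"
      unfolding Gt_def using L_pos by (simp add: eta_def field_simps)
    moreover have "0 \<le> L * norm (yb - x)^2" using L_pos by simp
    ultimately have "3 / (50 * L) * norm (grad_map n gf h eta x)^2 \<le> Gt" by linarith
    thus ?thesis using N0 by (intro mult_left_mono) auto
  qed
  also have "\<dots> = real (card (SS \<times> SS)) * (Phi (x, \<alpha>) - 3 / (50 * L) * norm (grad_map n gf h eta x)^2)"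
    by (simp add: N_def card_cartesian_product Phi_def Fx_def D_def)
  finally show ?thesis .
qed

end



context saga_alg
begin

abbreviation "st x0 \<omega> t \<equiv> saga_state n b eta gf h x0 \<omega> t"

lemma st_dep: "(\<And>s. s < t \<Longrightarrow> \<omega> s = \<omega>' s) \<Longrightarrow> st x0 \<omega> t = st x0 \<omega>' t"
  by (induction t) auto

lemma st_fin:
  assumes "h x0 \<noteq> \<infinity>"
  shows "h (fst (st x0 \<omega> t)) \<noteq> \<infinity>"
proof (cases t)
  case 0 thus ?thesis using assms by simp
next
  case (Suc s)
  obtain I J where IJ: "\<omega> s = (I, J)" by fastforce
  obtain x \<alpha> where xa: "st x0 \<omega> s = (x, \<alpha>)" by fastforce
  have "fst (st x0 \<omega> t) = prox eta h (x - eta *\<^sub>R vv x \<alpha> I)"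
    using Suc IJ xa by (simp add: step_eq)
  thus ?thesis using prox_fin[OF eta_pos] by (metis PInfty_neq_ereal(1))
qed

abbreviation \<Omega> :: "nat \<Rightarrow> (nat \<Rightarrow> (nat \<Rightarrow> nat) \<times> (nat \<Rightarrow> nat)) set"
  where "\<Omega> T \<equiv> {..<T} \<rightarrow>\<^sub>E (SS \<times> SS)"

lemma SS_finite: "finite (SS \<times> SS)" by (intro finite_cartesian_product finite_PiE) auto

lemma Omega_finite: "finite (\<Omega> T)" using SS_finite by (intro finite_PiE) auto

lemma one_round:
  assumes hx0: "h x0 \<noteq> \<infinity>" and t: "t < T"
  shows "(\<Sum>\<omega>\<in>\<Omega> T. Phi (st x0 \<omega> (Suc t)))
     \<le> (\<Sum>\<omega>\<in>\<Omega> T. Phi (st x0 \<omega> t) - 3 / (50 * L) * norm (grad_map n gf h eta (fst (st x0 \<omega> t)))^2)"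
proof -
  define A where "A = {..<T} - {t}"
  have TA: "{..<T} = insert t A" using t by (auto simp: A_def)
  have fA: "finite A" "t \<notin> A" by (auto simp: A_def)
  define G where "G \<omega> = Phi (st x0 \<omega> t) - 3 / (50 * L) * norm (grad_map n gf h eta (fst (st x0 \<omega> t)))^2" for \<omega>
  have stu: "st x0 (fun_upd \<omega> t a) t = st x0 \<omega> t" for \<omega> a by (rule st_dep) auto
  have "(\<Sum>\<omega>\<in>\<Omega> T. Phi (st x0 \<omega> (Suc t)))
      = (\<Sum>a\<in>SS \<times> SS. \<Sum>\<omega>\<in>PiE A (\<lambda>_. SS \<times> SS). Phi (st x0 (fun_upd \<omega> t a) (Suc t)))"
    unfolding TA by (rule sum_PiE_insert[OF fA]) (use SS_finite in \<open>auto intro!: finite_PiE\<close>)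
  also have "\<dots> = (\<Sum>\<omega>\<in>PiE A (\<lambda>_. SS \<times> SS). \<Sum>a\<in>SS \<times> SS. Phi (saga_step n b eta gf h a (st x0 \<omega> t)))"
    by (subst sum.swap) (simp add: stu)
  also have "\<dots> \<le> (\<Sum>\<omega>\<in>PiE A (\<lambda>_. SS \<times> SS). real (card (SS \<times> SS)) * G \<omega>)"
  proof (rule sum_mono)
    fix \<omega>
    obtain x \<alpha> where xa: "st x0 \<omega> t = (x, \<alpha>)" by fastforce
    have "h x \<noteq> \<infinity>" using st_fin[OF hx0, of \<omega> t] xa by simp
    from step_bound[OF this, of \<alpha>]
    show "(\<Sum>a\<in>SS \<times> SS. Phi (saga_step n b eta gf h a (st x0 \<omega> t))) \<le> real (card (SS \<times> SS)) * G \<omega>"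
      by (simp add: xa G_def)
  qed
  also have "\<dots> = (\<Sum>a\<in>SS \<times> SS. \<Sum>\<omega>\<in>PiE A (\<lambda>_. SS \<times> SS). G (fun_upd \<omega> t a))"
    by (subst sum.swap) (simp add: G_def stu)
  also have "\<dots> = (\<Sum>\<omega>\<in>\<Omega> T. G \<omega>)"
    unfolding TA by (rule sum_PiE_insert[OF fA, symmetric]) (use SS_finite in \<open>auto intro!: finite_PiE\<close>)
  finally show ?thesis by (simp add: G_def)
qed

lemma telescope:
  assumes hx0: "h x0 \<noteq> \<infinity>" and t: "t \<le> T"
  shows "(\<Sum>\<omega>\<in>\<Omega> T. Phi (st x0 \<omega> t))
     + 3 / (50 * L) * (\<Sum>s<t. \<Sum>\<omega>\<in>\<Omega> T. norm (grad_map n gf h eta (fst (st x0 \<omega> s)))^2)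
     \<le> real (card (\<Omega> T)) * Phi (x0, \<lambda>i. x0)"
  using t
proof (induction t)
  case 0 thus ?case by simp
next
  case (Suc t)
  hence IH: "(\<Sum>\<omega>\<in>\<Omega> T. Phi (st x0 \<omega> t))
     + 3 / (50 * L) * (\<Sum>s<t. \<Sum>\<omega>\<in>\<Omega> T. norm (grad_map n gf h eta (fst (st x0 \<omega> s)))^2)
     \<le> real (card (\<Omega> T)) * Phi (x0, \<lambda>i. x0)" by simp
  have "(\<Sum>\<omega>\<in>\<Omega> T. Phi (st x0 \<omega> (Suc t)))
     \<le> (\<Sum>\<omega>\<in>\<Omega> T. Phi (st x0 \<omega> t)) - 3 / (50 * L) * (\<Sum>\<omega>\<in>\<Omega> T. norm (grad_map n gf h eta (fst (st x0 \<omega> t)))^2)"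
    using one_round[OF hx0, of t T] Suc.prems by (simp add: sum_subtractf sum_distrib_left)
  thus ?case using IH by (simp add: distrib_left)
qed

end



theorem theorem4:
  fixes n b T :: nat and L :: real
    and f :: "nat \<Rightarrow> 'a::euclidean_space \<Rightarrow> real" and gf :: "nat \<Rightarrow> 'a \<Rightarrow> 'a"
    and h :: "'a \<Rightarrow> ereal" and x0 xstar :: 'a
  assumes n_pos: "n \<ge> 1"
    and L_pos: "L > 0"
    and grad: "\<And>i x. i < n \<Longrightarrow> (f i has_derivative (\<lambda>v. gf i x \<bullet> v)) (at x)"
    and smooth: "\<And>i x y. i < n \<Longrightarrow> norm (gf i x - gf i y) \<le> L * norm (x - y)"
    and h_proper: "proper_fun h" and h_lsc: "lsc_fun h" and h_convex: "ext_convex h"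
    and h_dom_closed: "closed (ext_dom h)"
    and xstar_min: "\<And>x. ereal ((1 / real n) * (\<Sum>i<n. f i xstar)) + h xstar
                          \<le> ereal ((1 / real n) * (\<Sum>i<n. f i x)) + h x"
    and b_def: "real b = real n powr (2 / 3)"
    and T_pos: "T \<ge> 1"
  shows "ereal (measure_pmf.expectation (pmf_of_set (draw_space n b T \<times> {..<T}))
            (\<lambda>(\<omega>, a). (norm (grad_map n gf h (1 / (5 * L))
                 (fst (saga_state n b (1 / (5 * L)) gf h x0 \<omega> a))))^2))
         \<le> ereal (50 * L / (3 * real T)) *
            ((ereal ((1 / real n) * (\<Sum>i<n. f i x0)) + h x0)
             - (ereal ((1 / real n) * (\<Sum>i<n. f i xstar)) + h xstar))"
proof -
  have nr: "real n > 0" using n_pos by simp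
  have b1: "b \<ge> 1"
  proof -
    have "1 \<le> real n powr (2 / 3)" using n_pos by (intro ge_one_powr_ge_zero) auto
    thus ?thesis using b_def by simp
  qed
  have b3: "real b ^ 3 = real n ^ 2"
  proof -
    have "real b ^ 3 = (real n powr (2 / 3)) powr (real 3)"
      using b_def nr by (subst powr_realpow) auto
    also have "\<dots> = real n powr (real 2)" by (simp add: powr_powr)
    also have "\<dots> = real n ^ 2" using nr by (subst powr_realpow) auto
    finally show ?thesis .
  qed
  interpret A: saga_alg n L f gf h b
    by unfold_locales (use n_pos L_pos grad smooth h_proper h_lsc h_convex b1 b3 in auto)
  have eta_eq: "1 / (5 * L) = A.eta" by (simp add: A.eta_def)
  have fav: "(1 / real n) * (\<Sum>i<n. f i x) = favg n f x" for x by (simp add: favg_def)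
  obtain xd where xd: "h xd \<noteq> \<infinity>" using h_proper unfolding proper_fun_def by blast
  have "h xstar \<noteq> \<infinity>"
  proof
    assume "h xstar = \<infinity>"
    thus False using xstar_min[of xd] xd h_proper unfolding proper_fun_def
      by (cases "h xd") auto
  qed
  moreover have "h xstar \<noteq> -\<infinity>" using h_proper unfolding proper_fun_def by blast
  ultimately obtain Hs where Hs: "h xstar = ereal Hs" by (cases "h xstar") auto
  define Fs where "Fs = favg n f xstar + Hs"
  have Fs_le: "Fs \<le> favg n f x + A.H x" if hxx: "h x \<noteq> \<infinity>" for x
  proof -
    have "h x \<noteq> -\<infinity>" using h_proper unfolding proper_fun_def by blast
    then obtain Hx where Hx: "h x = ereal Hx" using hxx by (cases "h x") auto
    show ?thesis using xstar_min[of x] unfolding fav Hs Hx Fs_def by simp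
  qed
  show ?thesis
  proof (cases "h x0 = \<infinity>")
    case True
    have k: "50 * L / (3 * real T) > 0" using L_pos T_pos by simp
    have "(ereal ((1 / real n) * (\<Sum>i<n. f i x0)) + h x0)
             - (ereal ((1 / real n) * (\<Sum>i<n. f i xstar)) + h xstar) = \<infinity>"
      using True Hs by simp
    moreover have "ereal (50 * L / (3 * real T)) * \<infinity> = \<infinity>" using k L_pos T_pos by simp
    ultimately show ?thesis by simp
  next
    case False
    have "h x0 \<noteq> -\<infinity>" using h_proper unfolding proper_fun_def by blast
    then obtain H0 where H0: "h x0 = ereal H0" using False by (cases "h x0") auto
    define F0 where "F0 = favg n f x0 + H0"
    define \<gamma> where "\<gamma> = 3 / (50 * L)"
    have gpos: "\<gamma> > 0" using L_pos by (simp add: \<gamma>_def)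
    define Om where "Om = A.\<Omega> T"
    define Q where "Q = (\<Sum>s<T. \<Sum>\<omega>\<in>Om. norm (grad_map n gf h A.eta (fst (A.st x0 \<omega> s)))^2)"
    have Omf: "finite Om" unfolding Om_def by (rule A.Omega_finite)
    have "Om \<noteq> {}"
    proof -
      have "(0::nat) \<in> {..<n}" using n_pos by simp
      hence "{..<n} \<noteq> {}" by blast
      hence "A.SS \<noteq> {}" by (simp add: PiE_eq_empty_iff)
      thus ?thesis unfolding Om_def by (auto simp: PiE_eq_empty_iff)
    qed
    hence cpos: "real (card Om) > 0" using Omf by (simp add: card_gt_0_iff)
    have tel: "(\<Sum>\<omega>\<in>Om. A.Phi (A.st x0 \<omega> T)) + \<gamma> * Q \<le> real (card Om) * A.Phi (x0, \<lambda>i. x0)"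
      using A.telescope[OF False, of T T] unfolding Om_def Q_def \<gamma>_def by simp
    have phi0: "A.Phi (x0, \<lambda>i. x0) = F0" by (simp add: A.Phi_def A.Dist_def F0_def H0)
    have "(\<Sum>\<omega>\<in>Om. A.Phi (A.st x0 \<omega> T)) \<ge> (\<Sum>\<omega>\<in>Om. Fs)"
    proof (rule sum_mono)
      fix \<omega>
      have "A.Dist (fst (A.st x0 \<omega> T)) (snd (A.st x0 \<omega> T)) \<ge> 0" by (simp add: A.Dist_def sum_nonneg)
      hence "A.cc * A.Dist (fst (A.st x0 \<omega> T)) (snd (A.st x0 \<omega> T)) \<ge> 0" using A.cc_pos by simp
      moreover have "Fs \<le> favg n f (fst (A.st x0 \<omega> T)) + A.H (fst (A.st x0 \<omega> T))"
        by (rule Fs_le[OF A.st_fin[OF False]])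
      ultimately show "Fs \<le> A.Phi (A.st x0 \<omega> T)" by (simp add: A.Phi_def)
    qed
    hence "real (card Om) * Fs + \<gamma> * Q \<le> real (card Om) * F0" using tel phi0 by simp
    hence Qb: "Q \<le> real (card Om) * (F0 - Fs) / \<gamma>" using gpos by (simp add: field_simps)
    define S where "S = Om \<times> {..<T}"
    have "(0::nat) \<in> {..<T}" using T_pos by simp
    hence Sf: "finite S" "S \<noteq> {}" using Omf \<open>Om \<noteq> {}\<close> by (auto simp: S_def)
    define g where "g = (\<lambda>(\<omega>, a). (norm (grad_map n gf h A.eta (fst (A.st x0 \<omega> a))))^2)"
    have "measure_pmf.expectation (pmf_of_set S) g = sum g S / real (card S)"
      by (rule integral_pmf_of_set[OF Sf(2,1)])
    also have "sum g S = Q"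
      unfolding S_def Q_def g_def by (simp add: sum.cartesian_product[symmetric] sum.swap[of _ Om])
    also have "real (card S) = real (card Om) * real T" by (simp add: S_def card_cartesian_product)
    finally have E: "measure_pmf.expectation (pmf_of_set S) g = Q / (real (card Om) * real T)" .
    have "Q / (real (card Om) * real T) \<le> (real (card Om) * (F0 - Fs) / \<gamma>) / (real (card Om) * real T)"
      using Qb cpos T_pos by (intro divide_right_mono) auto
    also have "\<dots> = 50 * L / (3 * real T) * (F0 - Fs)"
      using cpos T_pos L_pos by (simp add: \<gamma>_def field_simps)
    finally have main: "measure_pmf.expectation (pmf_of_set S) g \<le> 50 * L / (3 * real T) * (F0 - Fs)"
      unfolding E .
    have dr: "draw_space n b T = Om" by (simp add: draw_space_def Om_def)
    show ?thesis unfolding eta_eq fav dr using main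
      by (simp add: S_def g_def H0 Hs F0_def Fs_def)
  qed
qed


end
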